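(* Let $\{\nu_t\}_{t\ge0}$ and $\{\widetilde\nu_t\}_{t\ge0}$ be weakly continuous $\rhd$-convolution semigroups in $\mathcal{P}(\mathbb{T})$ with $\nu_0=\widetilde\nu_0=\delta_1$, $\nu_1=\widetilde\nu_1$, and $\nu_1\ne\omega$. Let $B_2,\widetilde B_2:\mathbb{D}\to\mathbb{C}$ be analytic with nonpositive real parts such that, for all $t\ge0$ and $z\in\mathbb{D}$, $$\tfrac{d}{dt}\eta_{\nu_t}(z)=\eta_{\nu_t}(z)B_2(\eta_{\nu_t}(z)),\qquad \tfrac{d}{dt}\eta_{\widetilde\nu_t}(z)=\eta_{\widetilde\nu_t}(z)\widetilde B_2(\eta_{\widetilde\nu_t}(z)).$$ Let $s_1=B_2(0)$. (1) If $\nu_1$ is not a Dirac measure, there exists an integer $n$ such that $\widetilde B_2=\big(1+\frac{2\pi in}{s_1}\big)B_2$. (2) If $\nu_1$ is a Dirac measure, there exists an integer $n$ such that $\widetilde B_2=B_2+2\pi in$.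
   Context: $\mathbb{T}$ is the unit circle, $\mathbb{D}$ the open unit disc, $\mathcal{P}(\mathbb{T})$ the Borel probability measures on $\mathbb{T}$, $\omega$ the normalized Haar measure on $\mathbb{T}$, and $\delta_1$ the Dirac mass at $1$. For $\nu\in\mathcal{P}(\mathbb{T})$ let $\psi_\nu(z)=\int\frac{z\zeta}{1-z\zeta}d\nu(\zeta)$ and $\eta_\nu=\psi_\nu/(1+\psi_\nu)$ on $\mathbb{D}$; $\eta_\nu$ determines $\nu$. The multiplicative monotone convolution is defined by $\eta_{\nu\rhd\lambda}=\eta_\nu\circ\eta_\lambda$. A weakly continuous $\rhd$-convolution semigroup is a family $\{\nu_t\}_{t\ge0}$ with $\nu_{s+t}=\nu_s\rhd\nu_t$ for all $s,t\ge0$ and $t\mapsto\nu_t$ weakly continuous. *)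

theory Defs
  imports "HOL-Probability.Probability"
begin

definition circle_prob :: "complex measure \<Rightarrow> bool" where
  "circle_prob \<nu> \<longleftrightarrow> prob_space \<nu> \<and> sets \<nu> = sets (borel :: complex measure)
     \<and> emeasure \<nu> (sphere 0 1) = 1"

definition circle_haar :: "complex measure" where
  "circle_haar = distr (restrict_space lborel {0..1::real}) borel (\<lambda>t. cis (2 * pi * t))"

definition psi_fun :: "complex measure \<Rightarrow> complex \<Rightarrow> complex" where
  "psi_fun \<nu> z = (\<integral>\<zeta>. z * \<zeta> / (1 - z * \<zeta>) \<partial>\<nu>)"

definition eta_fun :: "complex measure \<Rightarrow> complex \<Rightarrow> complex" where
  "eta_fun \<nu> z = psi_fun \<nu> z / (1 + psi_fun \<nu> z)"

definition weakly_continuous_family :: "(real \<Rightarrow> complex measure) \<Rightarrow> bool" where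
  "weakly_continuous_family \<nu> \<longleftrightarrow>
     (\<forall>f :: complex \<Rightarrow> real. continuous_on UNIV f \<and> bounded (range f) \<longrightarrow>
        continuous_on {0..} (\<lambda>t. \<integral>x. f x \<partial>(\<nu> t)))"

text \<open>Weakly continuous multiplicative monotone convolution semigroup;
  \<open>\<nu>\<^sub>s \<rhd> \<nu>\<^sub>t\<close> is the measure with eta-transform \<open>\<eta>\<^sub>\<nu>\<^sub>s \<circ> \<eta>\<^sub>\<nu>\<^sub>t\<close>, so
  \<open>\<nu>\<^sub>s\<^sub>+\<^sub>t = \<nu>\<^sub>s \<rhd> \<nu>\<^sub>t\<close> means exactly the identity of eta-transforms below.\<close>
definition monotone_semigroup :: "(real \<Rightarrow> complex measure) \<Rightarrow> bool" where
  "monotone_semigroup \<nu> \<longleftrightarrow>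
     (\<forall>t\<ge>0. circle_prob (\<nu> t)) \<and>
     (\<forall>s\<ge>0. \<forall>t\<ge>0. \<forall>z\<in>ball 0 1. eta_fun (\<nu> (s + t)) z = eta_fun (\<nu> s) (eta_fun (\<nu> t) z)) \<and>
     weakly_continuous_family \<nu>"

definition is_dirac :: "complex measure \<Rightarrow> bool" where
  "is_dirac \<mu> \<longleftrightarrow> (\<exists>\<zeta>. \<mu> = return borel \<zeta>)"

end

theory Submission imports Defs "HOL-Complex_Analysis.Complex_Analysis" begin

lemma cp_basic:
  assumes "circle_prob \<nu>"
  shows "prob_space \<nu>" "sets \<nu> = sets borel" "space \<nu> = UNIV"
    "AE x in \<nu>. norm x = 1"
proof -
  show P: "prob_space \<nu>" and S: "sets \<nu> = sets borel" using assms by (auto simp: circle_prob_def)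
  show SP: "space \<nu> = UNIV" using sets_eq_imp_space_eq[OF S] by simp
  interpret prob_space \<nu> by (fact P)
  have "sphere (0::complex) 1 \<in> sets \<nu>" using S by simp
  moreover have "emeasure \<nu> (sphere 0 1) = 1" using assms by (auto simp: circle_prob_def)
  ultimately have "AE x in \<nu>. x \<in> sphere 0 1"
    by (intro AE_prob_1) (simp add: emeasure_eq_measure)
  then show "AE x in \<nu>. norm x = 1" by simp
qed

lemma cp_integrable:
  assumes "circle_prob \<nu>" "g \<in> borel_measurable borel"
    "\<And>x. norm x = 1 \<Longrightarrow> norm (g x :: complex) \<le> B"
  shows "integrable \<nu> g"
proof -
  interpret prob_space \<nu> using cp_basic[OF assms(1)] by simp
  have m: "g \<in> borel_measurable \<nu>"
  proof -
    have "measurable \<nu> borel = measurable borel (borel::complex measure)"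
      by (rule measurable_cong_sets) (simp_all add: cp_basic(2)[OF assms(1)])
    then show ?thesis using assms(2) by simp
  qed
  have c: "integrable \<nu> (\<lambda>_. B)" by simp
  show ?thesis
  proof (rule Bochner_Integration.integrable_bound[OF c m])
    show "AE x in \<nu>. norm (g x) \<le> norm B"
      using cp_basic(4)[OF assms(1)]
    proof eventually_elim
      case (elim x)
      then show ?case using assms(3)[of x] by simp
    qed
  qed
qed

lemma cp_int_bound:
  assumes "circle_prob \<nu>" "g \<in> borel_measurable borel"
    "\<And>x. norm x = 1 \<Longrightarrow> norm (g x :: complex) \<le> B"
  shows "norm (integral\<^sup>L \<nu> g) \<le> B"
proof -
  interpret prob_space \<nu> using cp_basic[OF assms(1)] by simp
  have i: "integrable \<nu> g" by (rule cp_integrable[OF assms])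
  have "norm (integral\<^sup>L \<nu> g) \<le> (\<integral>x. norm (g x) \<partial>\<nu>)" by (rule integral_norm_bound)
  also have "\<dots> \<le> (\<integral>x. B \<partial>\<nu>)"
  proof (rule integral_mono_AE)
    show "AE x in \<nu>. norm (g x) \<le> B"
      using cp_basic(4)[OF assms(1)]
    proof eventually_elim
      case (elim x)
      then show ?case using assms(3)[of x] by simp
    qed
  qed (use i in simp_all)
  also have "\<dots> = B" by (simp add: prob_space)
  finally show ?thesis .
qed


lemma pt_bound:
  fixes z \<zeta> :: complex
  assumes "norm \<zeta> = 1" "norm z < 1"
  shows "1 - norm z \<le> norm (1 - z*\<zeta>)" "1 - z*\<zeta> \<noteq> 0"
proof -
  have "norm (1::complex) - norm (z*\<zeta>) \<le> norm (1 - z*\<zeta>)" by (rule norm_triangle_ineq2)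
  then show *: "1 - norm z \<le> norm (1 - z*\<zeta>)" using assms by (simp add: norm_mult)
  show "1 - z*\<zeta> \<noteq> 0" using * assms by auto
qed

lemma k_bound:
  fixes z \<zeta> :: complex
  assumes "norm \<zeta> = 1" "norm z < 1"
  shows "norm (z*\<zeta>/(1 - z*\<zeta>)) \<le> 1/(1 - norm z)"
proof -
  have "norm (z*\<zeta>/(1 - z*\<zeta>)) = norm z / norm (1 - z*\<zeta>)" using assms by (simp add: norm_divide norm_mult)
  also have "\<dots> \<le> 1 / (1 - norm z)"
    by (rule frac_le) (use pt_bound[OF assms] assms in auto)
  finally show ?thesis .
qed

lemma psi_diff:
  assumes cp: "circle_prob \<nu>" and z: "norm z < 1" and z0: "norm z0 < 1"
  shows "psi_fun \<nu> z - psi_fun \<nu> z0 = (z - z0) * (\<integral>\<zeta>. \<zeta>/((1-z*\<zeta>)*(1-z0*\<zeta>)) \<partial>\<nu>)"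
proof -
  interpret prob_space \<nu> using cp_basic[OF cp] by simp
  have i1: "integrable \<nu> (\<lambda>\<zeta>. z*\<zeta>/(1 - z*\<zeta>))"
    by (rule cp_integrable[OF cp, where B="1/(1-norm z)"]) (use k_bound z in auto)
  have i2: "integrable \<nu> (\<lambda>\<zeta>. z0*\<zeta>/(1 - z0*\<zeta>))"
    by (rule cp_integrable[OF cp, where B="1/(1-norm z0)"]) (use k_bound z0 in auto)
  have "psi_fun \<nu> z - psi_fun \<nu> z0 = (\<integral>\<zeta>. z*\<zeta>/(1 - z*\<zeta>) - z0*\<zeta>/(1 - z0*\<zeta>) \<partial>\<nu>)"
    unfolding psi_fun_def by (rule Bochner_Integration.integral_diff[OF i1 i2, symmetric])
  also have "\<dots> = (\<integral>\<zeta>. (z - z0) * (\<zeta>/((1-z*\<zeta>)*(1-z0*\<zeta>))) \<partial>\<nu>)"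
  proof (rule integral_cong_AE)
    show "AE x in \<nu>. z * x / (1 - z * x) - z0 * x / (1 - z0 * x) = (z - z0) * (x / ((1 - z * x) * (1 - z0 * x)))"
      using cp_basic(4)[OF cp]
    proof (rule eventually_mono)
      fix x :: complex assume "norm x = 1"
      then have a: "1 - z*x \<noteq> 0" and b: "1 - z0*x \<noteq> 0" using pt_bound z z0 by auto
      show "z * x / (1 - z * x) - z0 * x / (1 - z0 * x) = (z - z0) * (x / ((1 - z * x) * (1 - z0 * x)))"
        using a b by (simp add: divide_simps) (simp add: algebra_simps)
    qed
  qed (use cp_basic(2)[OF cp] in simp_all)
  also have "\<dots> = (z - z0) * (\<integral>\<zeta>. \<zeta>/((1-z*\<zeta>)*(1-z0*\<zeta>)) \<partial>\<nu>)"
    by (rule integral_mult_right_zero)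
  finally show ?thesis .
qed


lemma q_bound:
  fixes z z0 \<zeta> :: complex
  assumes "norm \<zeta> = 1" "norm z \<le> r" "r < 1" "norm z0 < 1"
  shows "norm (\<zeta>/((1-z*\<zeta>)*(1-z0*\<zeta>)) - \<zeta>/((1-z0*\<zeta>)*(1-z0*\<zeta>)))
     \<le> norm (z - z0) / ((1 - r) * (1 - norm z0)^2)"
proof -
  have z1: "norm z < 1" using assms by simp
  have a: "1 - z*\<zeta> \<noteq> 0" and b: "1 - z0*\<zeta> \<noteq> 0" using pt_bound assms z1 by auto
  have "\<zeta>/((1-z*\<zeta>)*(1-z0*\<zeta>)) - \<zeta>/((1-z0*\<zeta>)*(1-z0*\<zeta>))
        = (z - z0) * (\<zeta>*\<zeta>) / ((1-z*\<zeta>)*(1-z0*\<zeta>)*(1-z0*\<zeta>))"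
    using a b by (simp add: divide_simps) (simp add: algebra_simps)
  also have "norm \<dots> = norm (z - z0) / (norm (1-z*\<zeta>) * norm (1-z0*\<zeta>) * norm (1-z0*\<zeta>))"
    using assms by (simp add: norm_mult norm_divide)
  also have "\<dots> \<le> norm (z - z0) / ((1 - r) * (1 - norm z0) * (1 - norm z0))"
  proof (rule frac_le)
    have r1: "1 - r \<le> norm (1-z*\<zeta>)" using pt_bound(1)[OF assms(1) z1] assms by linarith
    have r2: "1 - norm z0 \<le> norm (1-z0*\<zeta>)" using pt_bound(1)[OF assms(1) assms(4)] .
    show "(1 - r) * (1 - norm z0) * (1 - norm z0) \<le> norm (1-z*\<zeta>) * norm (1-z0*\<zeta>) * norm (1-z0*\<zeta>)"
      using r1 r2 assms by (intro mult_mono) auto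
    show "0 < (1 - r) * (1 - norm z0) * (1 - norm z0)" using assms by simp
  qed simp_all
  finally show ?thesis by (simp add: power2_eq_square mult.assoc)
qed

lemma psi_has_deriv:
  assumes cp: "circle_prob \<nu>" and z0: "norm z0 < 1"
  shows "(psi_fun \<nu> has_field_derivative (\<integral>\<zeta>. \<zeta>/((1-z0*\<zeta>)*(1-z0*\<zeta>)) \<partial>\<nu>)) (at z0)"
proof -
  define Q where "Q z = (\<integral>\<zeta>. \<zeta>/((1-z*\<zeta>)*(1-z0*\<zeta>)) \<partial>\<nu>)" for z
  define r where "r = (1 + norm z0) / 2"
  have r: "norm z0 < r" "r < 1" using z0 by (auto simp: r_def)
  define C where "C = 1 / ((1 - r) * (1 - norm z0)^2)"
  have C: "C > 0" using r z0 by (simp add: C_def)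
  have qb: "norm (Q z - Q z0) \<le> norm (z - z0) * C" if "norm z \<le> r" for z
  proof -
    have iq: "integrable \<nu> (\<lambda>\<zeta>. \<zeta>/((1-w*\<zeta>)*(1-z0*\<zeta>)))" if "norm w < 1" for w
    proof (rule cp_integrable[OF cp, where B="1/((1 - norm w)*(1 - norm z0))"])
      fix x :: complex assume x: "norm x = 1"
      have "norm (x/((1-w*x)*(1-z0*x))) = 1/(norm (1-w*x) * norm (1-z0*x))"
        using x by (simp add: norm_divide norm_mult)
      also have "\<dots> \<le> 1/((1 - norm w)*(1 - norm z0))"
        using pt_bound(1)[OF x that] pt_bound(1)[OF x z0] that z0
        by (intro divide_left_mono mult_mono mult_pos_pos) auto
      finally show "norm (x/((1-w*x)*(1-z0*x))) \<le> 1/((1 - norm w)*(1 - norm z0))" .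
    qed simp
    have zz: "norm z < 1" using that r by simp
    have "Q z - Q z0 = (\<integral>\<zeta>. \<zeta>/((1-z*\<zeta>)*(1-z0*\<zeta>)) - \<zeta>/((1-z0*\<zeta>)*(1-z0*\<zeta>)) \<partial>\<nu>)"
      unfolding Q_def by (rule Bochner_Integration.integral_diff[OF iq[OF zz] iq[OF z0], symmetric])
    also have "norm \<dots> \<le> norm (z - z0) / ((1 - r) * (1 - norm z0)^2)"
      by (rule cp_int_bound[OF cp]) (use q_bound that r z0 in auto)
    finally show ?thesis by (simp add: C_def)
  qed
  have lim: "(Q \<longlongrightarrow> Q z0) (at z0)"
  proof (rule tendstoI)
    fix e :: real assume e: "e > 0"
    show "\<forall>\<^sub>F x in at z0. dist (Q x) (Q z0) < e"
      unfolding eventually_at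
    proof (intro exI conjI ballI impI)
      show "0 < min (r - norm z0) (e / C)" using r e C by simp
      fix x assume "x \<in> UNIV" and x: "x \<noteq> z0 \<and> dist x z0 < min (r - norm z0) (e / C)"
      have "norm x \<le> norm z0 + norm (x - z0)" by (metis add.commute diff_add_cancel norm_triangle_ineq)
      then have "norm x \<le> r" using x by (simp add: dist_norm)
      then have "dist (Q x) (Q z0) \<le> norm (x - z0) * C" using qb by (simp add: dist_norm)
      also have "\<dots> < e / C * C" using x C by (intro mult_strict_right_mono) (auto simp: dist_norm)
      finally show "dist (Q x) (Q z0) < e" using C by simp
    qed
  qed
  have ev: "\<forall>\<^sub>F x in at z0. Q x = (psi_fun \<nu> x - psi_fun \<nu> z0) / (x - z0)"
    unfolding eventually_at
  proof (intro exI conjI ballI impI)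
    show "0 < r - norm z0" using r by simp
    fix x assume "x \<in> UNIV" and x: "x \<noteq> z0 \<and> dist x z0 < r - norm z0"
    have "norm x \<le> norm z0 + norm (x - z0)" by (metis add.commute diff_add_cancel norm_triangle_ineq)
    then have "norm x < 1" using x r by (simp add: dist_norm)
    then show "Q x = (psi_fun \<nu> x - psi_fun \<nu> z0) / (x - z0)"
      using psi_diff[OF cp _ z0, of x] x by (simp add: Q_def)
  qed
  show ?thesis
    unfolding has_field_derivative_iff
    using Lim_transform_eventually[OF lim ev] by (simp add: Q_def)
qed

lemma re_bound:
  fixes w :: complex
  assumes "norm w < 1"
  shows "Re (w/(1-w)) \<ge> -1/2 + (1 - (norm w)^2)/8"
proof -
  obtain a b where w: "w = Complex a b" by (cases w)
  have n2: "(norm w)^2 = a^2 + b^2" by (simp add: w cmod_power2)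
  have "(norm w)^2 < 1^2" by (rule power_strict_mono) (use assms in auto)
  then have lt: "a^2 + b^2 < 1" using n2 by simp
  have "a^2 < 1" using lt zero_le_power2[of b] by linarith
  then have "\<bar>a\<bar> < 1" by (simp add: abs_square_less_1)
  then have a1: "a < 1" "-1 < a" by auto
  define D where "D = (1-a)^2 + b^2"
  have De: "D = 1 - 2*a + (a^2 + b^2)" by (simp add: D_def power2_diff)
  have "(1-a)^2 > 0" using a1 by simp
  then have Dpos: "D > 0" unfolding D_def using zero_le_power2[of b] by linarith
  have D4: "D \<le> 4" using De lt a1 by linarith
  have re: "Re (w/(1-w)) = (a - (a^2 + b^2)) / D"
    by (simp add: w D_def Re_divide power2_eq_square algebra_simps)
  have key: "D * (-1/2 + (1 - (a^2+b^2))/8) \<le> a - (a^2 + b^2)"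
  proof -
    have e1: "a - (a^2 + b^2) = -D/2 + (1 - (a^2+b^2))/2" using De by (simp add: field_simps)
    have "D * (1 - (a^2+b^2)) \<le> 4 * (1 - (a^2+b^2))"
      by (rule mult_right_mono) (use D4 lt in auto)
    moreover have "D * (-1/2 + (1 - (a^2+b^2))/8) = -D/2 + (D * (1 - (a^2+b^2)))/8"
      by (simp add: algebra_simps)
    ultimately show ?thesis unfolding e1 by linarith
  qed
  show ?thesis unfolding re n2 using key Dpos by (simp add: pos_le_divide_eq mult.commute)
qed


lemma psi_re:
  assumes cp: "circle_prob \<nu>" and z: "norm z < 1"
  shows "Re (psi_fun \<nu> z) \<ge> -1/2 + (1 - (norm z)^2)/8"
proof -
  interpret prob_space \<nu> using cp_basic[OF cp] by simp
  have i: "integrable \<nu> (\<lambda>\<zeta>. z*\<zeta>/(1 - z*\<zeta>))"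
    by (rule cp_integrable[OF cp, where B="1/(1-norm z)"]) (use k_bound z in auto)
  have "Re (psi_fun \<nu> z) = (\<integral>\<zeta>. Re (z*\<zeta>/(1 - z*\<zeta>)) \<partial>\<nu>)"
    unfolding psi_fun_def by (rule integral_bounded_linear[OF bounded_linear_Re i, symmetric])
  also have "\<dots> \<ge> -1/2 + (1 - (norm z)^2)/8"
  proof (rule integral_ge_const)
    show "integrable \<nu> (\<lambda>\<zeta>. Re (z*\<zeta>/(1 - z*\<zeta>)))" using i by simp
    show "AE x in \<nu>. -1/2 + (1 - (norm z)^2)/8 \<le> Re (z*x/(1 - z*x))"
      using cp_basic(4)[OF cp]
    proof eventually_elim
      case (elim x)
      then have "norm (z*x) = norm z" by (simp add: norm_mult)
      then show ?case using re_bound[of "z*x"] z by simp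
    qed
  qed
  finally show ?thesis .
qed

lemma eta_basic:
  assumes cp: "circle_prob \<nu>" and z: "norm z < 1"
  shows "1 + psi_fun \<nu> z \<noteq> 0" "norm (eta_fun \<nu> z) < 1"
proof -
  define p where "p = psi_fun \<nu> z"
  have "(norm z)^2 < 1^2" by (rule power_strict_mono) (use z in auto)
  then have "(1 - (norm z)^2)/8 > 0" by simp
  then have re: "Re p > -1/2" using psi_re[OF cp z] unfolding p_def by linarith
  have e: "(norm (1+p))^2 = (norm p)^2 + (1 + 2 * Re p)"
    unfolding cmod_power2 by (simp add: power2_eq_square algebra_simps)
  have "(norm p)^2 < (norm (1+p))^2" using e re by simp
  then have lt: "norm p < norm (1+p)" by (rule power2_less_imp_less) simp
  then show "1 + psi_fun \<nu> z \<noteq> 0" unfolding p_def[symmetric] by auto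
  have "norm (eta_fun \<nu> z) = norm p / norm (1+p)" by (simp add: eta_fun_def p_def norm_divide)
  also have "\<dots> < 1" using lt by (subst divide_less_eq_1) auto
  finally show "norm (eta_fun \<nu> z) < 1" .
qed

lemma psi_0: "psi_fun \<nu> 0 = 0" by (simp add: psi_fun_def)
lemma eta_0: "eta_fun \<nu> 0 = 0" by (simp add: eta_fun_def psi_0)

lemma eta_eq: "eta_fun \<nu> = (\<lambda>z. psi_fun \<nu> z / (1 + psi_fun \<nu> z))"
  by (rule ext) (simp add: eta_fun_def)

lemma eta_has_deriv:
  assumes cp: "circle_prob \<nu>" and z: "norm z < 1"
  shows "(eta_fun \<nu> has_field_derivative
     ((\<integral>\<zeta>. \<zeta>/((1-z*\<zeta>)*(1-z*\<zeta>)) \<partial>\<nu>) * (1 + psi_fun \<nu> z) - psi_fun \<nu> z * (\<integral>\<zeta>. \<zeta>/((1-z*\<zeta>)*(1-z*\<zeta>)) \<partial>\<nu>))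
       / ((1 + psi_fun \<nu> z) * (1 + psi_fun \<nu> z))) (at z)"
proof -
  note d = psi_has_deriv[OF cp z]
  have d2: "((\<lambda>z. 1 + psi_fun \<nu> z) has_field_derivative (0 + (\<integral>\<zeta>. \<zeta>/((1-z*\<zeta>)*(1-z*\<zeta>)) \<partial>\<nu>))) (at z)"
    by (rule DERIV_add[OF DERIV_const d])
  show ?thesis unfolding eta_eq using DERIV_divide[OF d d2 eta_basic(1)[OF cp z]] by simp
qed

lemma eta_holo:
  assumes cp: "circle_prob \<nu>"
  shows "eta_fun \<nu> holomorphic_on ball 0 1"
proof (subst holomorphic_on_open)
  show "\<forall>x\<in>ball 0 1. \<exists>f'. (eta_fun \<nu> has_field_derivative f') (at x)"
  proof
    fix x :: complex assume "x \<in> ball 0 1"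
    then have "norm x < 1" by simp
    from eta_has_deriv[OF cp this] show "\<exists>f'. (eta_fun \<nu> has_field_derivative f') (at x)" by blast
  qed
qed simp

lemma eta_deriv0:
  assumes cp: "circle_prob \<nu>"
  shows "(eta_fun \<nu> has_field_derivative (\<integral>\<zeta>. \<zeta> \<partial>\<nu>)) (at 0)"
  using eta_has_deriv[OF cp, of 0] by (simp add: psi_0)

lemma eta_return:
  assumes "norm \<zeta> = 1" "norm z < 1"
  shows "eta_fun (return borel \<zeta>) z = \<zeta> * z"
proof -
  have ne: "1 - z*\<zeta> \<noteq> 0" using pt_bound assms by auto
  have "psi_fun (return borel \<zeta>) z = z*\<zeta>/(1 - z*\<zeta>)"
    unfolding psi_fun_def by (rule integral_return) auto
  moreover have "1 + z*\<zeta>/(1 - z*\<zeta>) = 1/(1 - z*\<zeta>)" using ne by (simp add: field_simps)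
  ultimately show ?thesis using ne by (simp add: eta_fun_def)
qed

lemma unit_eq:
  fixes x a :: complex
  assumes "norm x = 1" "norm a = 1" "Re (cnj a * x) = 1"
  shows "x = a"
proof -
  obtain pp qq where a: "a = Complex pp qq" by (cases a)
  obtain uu vv where x: "x = Complex uu vv" by (cases x)
  have 1: "uu^2 + vv^2 = 1" using assms(1) x by (metis cmod_power2 complex.sel one_power2)
  have 2: "pp^2 + qq^2 = 1" using assms(2) a by (metis cmod_power2 complex.sel one_power2)
  have 3: "pp * uu + qq * vv = 1" using assms(3) a x by simp
  have "(uu-pp)^2 + (vv-qq)^2 = 0" using 1 2 3 by (simp add: power2_diff algebra_simps)
  then have "uu = pp" "vv = qq" by (simp_all add: sum_power2_eq_zero_iff)
  then show ?thesis using a x by simp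
qed

lemma m1_le:
  assumes cp: "circle_prob \<nu>"
  shows "norm (\<integral>\<zeta>. \<zeta> \<partial>\<nu>) \<le> 1"
  by (rule cp_int_bound[OF cp]) auto

lemma m1_dirac:
  assumes cp: "circle_prob \<nu>" and n: "norm (\<integral>\<zeta>. \<zeta> \<partial>\<nu>) = 1"
  shows "\<nu> = return borel (\<integral>\<zeta>. \<zeta> \<partial>\<nu>)"
proof -
  interpret prob_space \<nu> using cp_basic[OF cp] by simp
  define a where "a = (\<integral>\<zeta>. \<zeta> \<partial>\<nu>)"
  have na: "norm a = 1" using n a_def by simp
  have i: "integrable \<nu> (\<lambda>\<zeta>. \<zeta>)" by (rule cp_integrable[OF cp, where B=1]) auto
  have i2: "integrable \<nu> (\<lambda>\<zeta>. cnj a * \<zeta>)" using i by simp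
  have "(\<integral>\<zeta>. Re (cnj a * \<zeta>) \<partial>\<nu>) = Re (\<integral>\<zeta>. cnj a * \<zeta> \<partial>\<nu>)"
    by (rule integral_bounded_linear[OF bounded_linear_Re i2])
  also have "\<dots> = Re (cnj a * a)" by (simp add: a_def)
  also have "\<dots> = (Re a)^2 + (Im a)^2" by (simp add: power2_eq_square)
  also have "\<dots> = 1" using na by (simp add: cmod_power2[symmetric])
  finally have int1: "(\<integral>\<zeta>. Re (cnj a * \<zeta>) \<partial>\<nu>) = 1" .
  have ire: "integrable \<nu> (\<lambda>\<zeta>. Re (cnj a * \<zeta>))" using i2 by (rule integrable_Re)
  have ic: "integrable \<nu> (\<lambda>\<zeta>. 1::real)" by simp
  have ir: "integrable \<nu> (\<lambda>\<zeta>. 1 - Re (cnj a * \<zeta>))"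
    by (rule Bochner_Integration.integrable_diff[OF ic ire])
  have "(\<integral>\<zeta>. 1 - Re (cnj a * \<zeta>) \<partial>\<nu>) = (\<integral>\<zeta>. 1 \<partial>\<nu>) - (\<integral>\<zeta>. Re (cnj a * \<zeta>) \<partial>\<nu>)"
    by (rule Bochner_Integration.integral_diff[OF ic ire])
  then have "(\<integral>\<zeta>. 1 - Re (cnj a * \<zeta>) \<partial>\<nu>) = 0"
    using int1 by (simp add: prob_space)
  moreover have nn: "AE x in \<nu>. 0 \<le> 1 - Re (cnj a * x)"
    using cp_basic(4)[OF cp]
  proof eventually_elim
    case (elim x)
    have "Re (cnj a * x) \<le> norm (cnj a * x)" by (rule complex_Re_le_cmod)
    also have "\<dots> = 1" using elim na by (simp add: norm_mult)
    finally show ?case by simp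
  qed
  ultimately have "AE x in \<nu>. 1 - Re (cnj a * x) = 0"
    using integral_nonneg_eq_0_iff_AE[OF ir nn] by simp
  then have ae: "AE x in \<nu>. x = a"
    using cp_basic(4)[OF cp]
  proof eventually_elim
    case (elim x) then show ?case using unit_eq[of x a] na by simp
  qed
  have "\<nu> = return borel a"
  proof (rule measure_eqI)
    show "sets \<nu> = sets (return borel a)" using cp_basic(2)[OF cp] by simp
    fix A assume A: "A \<in> sets \<nu>"
    then have Ab: "A \<in> sets borel" using cp_basic(2)[OF cp] by simp
    show "emeasure \<nu> A = emeasure (return borel a) A"
    proof (cases "a \<in> A")
      case True
      have "emeasure \<nu> A = emeasure \<nu> (space \<nu>)"
        by (rule emeasure_eq_AE) (use ae True A in \<open>auto elim!: eventually_mono\<close>)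
      then show ?thesis using True Ab by (simp add: emeasure_space_1)
    next
      case False
      have "emeasure \<nu> A = emeasure \<nu> {}"
        by (rule emeasure_eq_AE) (use ae False A in \<open>auto elim!: eventually_mono\<close>)
      then show ?thesis using False Ab by simp
    qed
  qed
  then show ?thesis by (simp add: a_def)
qed


locale flow =
  fixes \<nu> :: "real \<Rightarrow> complex measure" and B :: "complex \<Rightarrow> complex"
  assumes sg: "monotone_semigroup \<nu>" and init: "\<nu> 0 = return borel 1"
    and holB: "B holomorphic_on ball 0 1"
    and der: "\<forall>t\<ge>0. \<forall>z\<in>ball 0 1. ((\<lambda>s. eta_fun (\<nu> s) z) has_vector_derivative
            eta_fun (\<nu> t) z * B (eta_fun (\<nu> t) z)) (at t within {0..})"
begin

abbreviation F where "F t \<equiv> eta_fun (\<nu> t)"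

lemma cp: "t \<ge> 0 \<Longrightarrow> circle_prob (\<nu> t)"
  using sg by (simp add: monotone_semigroup_def)

lemma comp: "s \<ge> 0 \<Longrightarrow> t \<ge> 0 \<Longrightarrow> norm z < 1 \<Longrightarrow> F (s+t) z = F s (F t z)"
  using sg by (simp add: monotone_semigroup_def)

lemma F0: "norm z < 1 \<Longrightarrow> F 0 z = z"
  using eta_return[of 1 z] init by simp

lemma Fin: "t \<ge> 0 \<Longrightarrow> norm z < 1 \<Longrightarrow> norm (F t z) < 1"
  using eta_basic(2)[OF cp] by simp

lemma Fschw: "t \<ge> 0 \<Longrightarrow> norm z < 1 \<Longrightarrow> norm (F t z) \<le> norm z"
  by (rule Schwarz_Lemma(1)[OF eta_holo[OF cp] eta_0]) (auto intro: Fin)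

lemma Fder: "t \<ge> 0 \<Longrightarrow> norm z < 1 \<Longrightarrow>
   ((\<lambda>s. F s z) has_vector_derivative F t z * B (F t z)) (at t within {0..})"
  using der by simp

lemma Fcont: "norm z < 1 \<Longrightarrow> continuous_on {0..} (\<lambda>s. F s z)"
  unfolding continuous_on_eq_continuous_within
  using Fder has_vector_derivative_continuous by fastforce

lemma Bcont: "continuous_on (ball 0 1) B"
  using holB by (rule holomorphic_on_imp_continuous_on)

lemma bcont: "norm z < 1 \<Longrightarrow> continuous_on {0..} (\<lambda>s. B (F s z))"
  by (rule continuous_on_compose2[OF Bcont Fcont]) (auto intro: Fin)

lemma rep:
  assumes z: "norm z < 1" and T: "T \<ge> 0"
  shows "F T z = z * exp (integral {0..T} (\<lambda>s. B (F s z)))"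
proof -
  define b where "b s = B (F s z)" for s
  define I where "I u = integral {0..u} b" for u
  have cb: "continuous_on {0..T} b" unfolding b_def
    by (rule continuous_on_subset[OF bcont[OF z]]) auto
  have Ider: "(I has_vector_derivative b t) (at t within {0..T})" if "t \<in> {0..T}" for t
    unfolding I_def by (rule integral_has_vector_derivative[OF cb that])
  define v where "v t = F t z * exp (- I t)" for t
  have vder: "(v has_vector_derivative 0) (at t within {0..T})" if t: "t \<in> {0..T}" for t
  proof -
    have d1: "((\<lambda>s. F s z) has_vector_derivative F t z * B (F t z)) (at t within {0..T})"
      by (rule has_vector_derivative_within_subset[OF Fder]) (use t z in auto)
    have d2: "((\<lambda>s. - I s) has_vector_derivative - b t) (at t within {0..T})"
      by (rule has_vector_derivative_minus[OF Ider[OF t]])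
    have d3: "((exp \<circ> (\<lambda>s. - I s)) has_vector_derivative (- b t) * exp (- I t)) (at t within {0..T})"
      by (rule field_vector_diff_chain_within[OF d2]) (rule has_field_derivative_at_within[OF DERIV_exp])
    have P: "((\<lambda>s. F s z * (exp \<circ> (\<lambda>s. - I s)) s) has_vector_derivative
        F t z * ((- b t) * exp (- I t)) + F t z * B (F t z) * (exp \<circ> (\<lambda>s. - I s)) t) (at t within {0..T})"
      by (rule has_vector_derivative_mult[OF d1 d3])
    have X0: "F t z * ((- b t) * exp (- I t)) + F t z * B (F t z) * (exp \<circ> (\<lambda>s. - I s)) t = 0"
      by (simp add: b_def algebra_simps)
    have eq: "(\<lambda>s. F s z * (exp \<circ> (\<lambda>s. - I s)) s) = v" by (simp add: v_def fun_eq_iff)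
    show ?thesis using P unfolding eq X0 .
  qed
  obtain c where c: "\<And>x. x \<in> {0..T} \<Longrightarrow> v x = c"
    by (rule has_vector_derivative_zero_constant[of "{0..T}" v]) (use vder in auto)
  have "v 0 = z" using F0[OF z] by (simp add: v_def I_def)
  then have "v T = z" using c[of 0] c[of T] T by simp
  then have vT: "F T z * exp (- I T) = z" by (simp add: v_def)
  have "F T z = F T z * exp (- I T) * exp (I T)" by (simp add: exp_minus)
  also have "\<dots> = z * exp (I T)" using vT by simp
  also have "I T = integral {0..T} (\<lambda>s. B (F s z))" by (simp add: I_def b_def[abs_def])
  finally show ?thesis .
qed

lemma lim1: "((\<lambda>z. F 1 z / z) \<longlongrightarrow> exp (B 0)) (at 0)"
proof -
  define J where "J z = integral {0..1} (\<lambda>s. B (F s z))" for z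
  have cB0: "isCont B 0"
    using Bcont by (simp add: continuous_on_eq_continuous_at)
  have J: "(J \<longlongrightarrow> B 0) (at 0)"
  proof (rule tendstoI)
    fix e :: real assume e: "e > 0"
    obtain d where d: "d > 0" "\<And>w. dist w 0 < d \<Longrightarrow> dist (B w) (B 0) < e/2"
      using cB0[unfolded continuous_at_eps_delta] e by (metis half_gt_zero)
    show "\<forall>\<^sub>F x in at 0. dist (J x) (B 0) < e"
      unfolding eventually_at
    proof (intro exI conjI ballI impI)
      show "0 < min d 1" using d by simp
      fix x :: complex assume "x \<in> UNIV" and x: "x \<noteq> 0 \<and> dist x 0 < min d 1"
      then have x1: "norm x < 1" and xd: "norm x < d" by auto
      have ci: "(\<lambda>s. B (F s x)) integrable_on {0..1}"
        by (rule integrable_continuous_real) (rule continuous_on_subset[OF bcont[OF x1]], auto)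
      have "J x - B 0 = integral {0..1} (\<lambda>s. B (F s x) - B 0)"
        unfolding J_def by (subst integral_diff[OF ci]) auto
      also have "norm \<dots> \<le> e/2 * Henstock_Kurzweil_Integration.content (cbox 0 (1::real))"
      proof (rule has_integral_bound[where f="\<lambda>s. B (F s x) - B 0"])
        show "0 \<le> e/2" using e by simp
        show "((\<lambda>s. B (F s x) - B 0) has_integral integral {0..1} (\<lambda>s. B (F s x) - B 0)) (cbox 0 1)"
          using ci by (auto intro!: integrable_integral integrable_diff)
        fix s :: real assume s: "s \<in> cbox 0 1"
        then have "norm (F s x) \<le> norm x" using Fschw[OF _ x1] by auto
        then have "dist (F s x) 0 < d" using xd by simp
        then show "norm (B (F s x) - B 0) \<le> e/2" using d(2) by (simp add: dist_norm less_imp_le)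
      qed
      finally show "dist (J x) (B 0) < e" using e by (simp add: dist_norm)
    qed
  qed
  have "((\<lambda>z. exp (J z)) \<longlongrightarrow> exp (B 0)) (at 0)" by (rule tendsto_exp[OF J])
  moreover have "\<forall>\<^sub>F z in at 0. exp (J z) = F 1 z / z"
    unfolding eventually_at
  proof (intro exI conjI ballI impI)
    show "(0::real) < 1" by simp
    fix x :: complex assume "x \<in> UNIV" and x: "x \<noteq> 0 \<and> dist x 0 < 1"
    then show "exp (J x) = F 1 x / x" using rep[of x 1] by (simp add: J_def)
  qed
  ultimately show ?thesis by (rule Lim_transform_eventually)
qed

lemma m1_eq: "exp (B 0) = (\<integral>\<zeta>. \<zeta> \<partial>(\<nu> 1))"
proof -
  have "(F 1 has_field_derivative (\<integral>\<zeta>. \<zeta> \<partial>(\<nu> 1))) (at 0)" by (rule eta_deriv0[OF cp]) simp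
  then have "((\<lambda>y. (F 1 y - F 1 0) / (y - 0)) \<longlongrightarrow> (\<integral>\<zeta>. \<zeta> \<partial>(\<nu> 1))) (at 0)"
    by (simp add: has_field_derivative_iff)
  then have "((\<lambda>y. F 1 y / y) \<longlongrightarrow> (\<integral>\<zeta>. \<zeta> \<partial>(\<nu> 1))) (at 0)" by (simp add: eta_0)
  with lim1 show ?thesis by (rule tendsto_unique[rotated]) simp
qed


lemma fe:
  assumes w: "norm w < 1" and dd: "(F 1 has_field_derivative d) (at w)"
  shows "F 1 w * B (F 1 w) = (w * B w) * d"
proof -
  have nb: "at (0::real) within {0..} \<noteq> bot"
    by (simp add: at_within_Ici_at_right)
  have s1: "((\<lambda>t::real. 1 + t) has_vector_derivative 1) (at 0 within {0..})"
    using has_vector_derivative_add[OF has_vector_derivative_const has_vector_derivative_id] by simp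
  have s2: "((\<lambda>s. F s w) has_vector_derivative F 1 w * B (F 1 w)) (at 1 within (\<lambda>t::real. 1 + t) ` {0..})"
    by (rule has_vector_derivative_within_subset[OF Fder]) (use w in auto)
  have D1: "(((\<lambda>s. F s w) \<circ> (\<lambda>t. 1 + t)) has_vector_derivative 1 *\<^sub>R (F 1 w * B (F 1 w))) (at 0 within {0..})"
    by (rule vector_diff_chain_within[OF s1]) (use s2 in simp)
  have f0: "((\<lambda>s. F s w) has_vector_derivative w * B w) (at 0 within {0..})"
    using Fder[of 0 w] w F0[OF w] by simp
  have dd': "(F 1 has_field_derivative d) (at ((\<lambda>s. F s w) 0) within (\<lambda>s. F s w) ` {0..})"
    using F0[OF w] dd by (simp add: has_field_derivative_at_within)
  have D2: "((F 1 \<circ> (\<lambda>s. F s w)) has_vector_derivative (w * B w) * d) (at 0 within {0..})"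
    by (rule field_vector_diff_chain_within[OF f0 dd'])
  have D2': "(((\<lambda>s. F s w) \<circ> (\<lambda>t. 1 + t)) has_vector_derivative (w * B w) * d) (at 0 within {0..})"
  proof (rule has_vector_derivative_transform_within[OF D2 zero_less_one])
    show "(0::real) \<in> {0..}" by simp
    fix x' :: real assume "x' \<in> {0..}"
    then show "(F 1 \<circ> (\<lambda>s. F s w)) x' = ((\<lambda>s. F s w) \<circ> (\<lambda>t. 1 + t)) x'"
      using comp[of 1 x' w] w by simp
  qed
  have "1 *\<^sub>R (F 1 w * B (F 1 w)) = (w * B w) * d"
    by (rule vector_derivative_unique_within[OF nb D1 D2'])
  then show ?thesis by simp
qed

lemma dirac_const:
  assumes dir: "is_dirac (\<nu> 1)"
  shows "\<forall>z\<in>ball 0 1. B z = B 0"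
proof -
  obtain \<zeta> where \<zeta>: "\<nu> 1 = return borel \<zeta>" using dir by (auto simp: is_dirac_def)
  have "emeasure (return borel \<zeta>) (sphere 0 1) = 1" using cp[of 1] \<zeta> by (simp add: circle_prob_def)
  then have "\<zeta> \<in> sphere 0 1" by (cases "\<zeta> \<in> sphere 0 1") auto
  then have n\<zeta>: "norm \<zeta> = 1" by simp
  have F1: "F 1 z = \<zeta> * z" if "norm z < 1" for z using eta_return[OF n\<zeta> that] \<zeta> by simp
  have isom: "norm (F t z) = norm z" if t: "t \<in> {0..1}" and z: "norm z < 1" for t z
  proof (rule antisym)
    show "norm (F t z) \<le> norm z" using Fschw t z by simp
    have "norm z = norm (F 1 z)" using F1[OF z] n\<zeta> by (simp add: norm_mult)
    also have "F 1 z = F ((1-t) + t) z" by simp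
    also have "\<dots> = F (1-t) (F t z)" by (rule comp) (use t z in auto)
    also have "norm \<dots> \<le> norm (F t z)" by (rule Fschw) (use t z Fin in auto)
    finally show "norm z \<le> norm (F t z)" .
  qed
  have reB: "Re (B z) = 0" if z: "norm z < 1" "z \<noteq> 0" for z
  proof -
    define b where "b s = B (F s z)" for s
    define I where "I u = integral {0..u} b" for u
    have cb: "continuous_on {0..1} b" unfolding b_def
      by (rule continuous_on_subset[OF bcont[OF z(1)]]) auto
    have Ider: "(I has_vector_derivative b 0) (at 0 within {0..1})"
      unfolding I_def by (rule integral_has_vector_derivative[OF cb]) simp
    have ReI: "Re (I t) = 0" if t: "t \<in> {0..1}" for t
    proof -
      have "F t z = z * exp (I t)" using rep[OF z(1), of t] t by (simp add: I_def b_def[abs_def])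
      then have "norm z = norm z * exp (Re (I t))" using isom[OF t z(1)] by (simp add: norm_mult)
      then have "exp (Re (I t)) = 1" using z by simp
      then show ?thesis by simp
    qed
    have D: "((\<lambda>t. Re (I t)) has_vector_derivative Re (b 0)) (at 0 within {0..1})"
      by (rule bounded_linear.has_vector_derivative[OF bounded_linear_Re Ider])
    have D0: "((\<lambda>t. Re (I t)) has_vector_derivative 0) (at 0 within {0..1})"
    proof (rule has_vector_derivative_transform_within[OF has_vector_derivative_const zero_less_one])
      show "(0::real) \<in> {0..1}" by simp
      fix x' :: real assume "x' \<in> {0..1}"
      then show "0 = Re (I x')" using ReI by simp
    qed
    have nb: "at (0::real) within {0..1} \<noteq> bot"
      by (simp add: at_within_Icc_at_right)
    have "Re (b 0) = 0" by (rule vector_derivative_unique_within[OF nb D D0])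
    then show ?thesis using F0[OF z(1)] by (simp add: b_def)
  qed
  have "B constant_on ball 0 1"
  proof (rule ccontr)
    assume nc: "\<not> B constant_on ball 0 1"
    define U where "U = ball (0::complex) 1 - {0}"
    have oU1: "open U" unfolding U_def by (rule open_delete[OF open_ball])
    have sU: "U \<subseteq> ball 0 1" unfolding U_def by blast
    have oU: "open (B ` U)"
      by (rule open_mapping_thm[OF holB open_ball connected_ball oU1 sU nc])
    have hU: "1/2 \<in> U" by (simp add: U_def)
    have "B (1/2) \<in> B ` U" using hU by (rule imageI)
    then have "\<exists>e>0. ball (B (1/2)) e \<subseteq> B ` U" by (simp only: open_contains_ball_eq[OF oU])
    then obtain e where e: "e > 0" "ball (B (1/2)) e \<subseteq> B ` U" by blast
    have "dist (B (1/2)) (B (1/2) + of_real (e/2)) < e" using e(1) by (simp add: dist_norm)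
    then have "B (1/2) + of_real (e/2) \<in> ball (B (1/2)) e" by simp
    then have "B (1/2) + of_real (e/2) \<in> B ` U" using e(2) by blast
    then obtain u where u: "u \<in> U" "B (1/2) + of_real (e/2) = B u" by (rule imageE)
    have "norm u < 1" "u \<noteq> 0" using u(1) by (simp_all add: U_def)
    then have r1: "Re (B u) = 0" by (rule reB)
    have r2: "Re (B (1/2)) = 0" by (rule reB) simp_all
    have "Re (B u) = Re (B (1/2)) + e/2" using u(2) by (metis Re_complex_of_real plus_complex.sel(1))
    then show False using r1 r2 e(1) by simp
  qed
  then obtain c where c: "\<forall>x\<in>ball 0 1. B x = c" by (auto simp: constant_on_def)
  then show ?thesis by simp
qed

end

theorem theorem5p8:
  fixes \<nu> \<nu>' :: "real \<Rightarrow> complex measure" and B2 B2' :: "complex \<Rightarrow> complex"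
  assumes "monotone_semigroup \<nu>" and "monotone_semigroup \<nu>'"
    and "\<nu> 0 = return borel 1" and "\<nu>' 0 = return borel 1"
    and "\<nu> 1 = \<nu>' 1" and "\<nu> 1 \<noteq> circle_haar"
    and "B2 holomorphic_on ball 0 1" and "B2' holomorphic_on ball 0 1"
    and "\<forall>z\<in>ball 0 1. Re (B2 z) \<le> 0" and "\<forall>z\<in>ball 0 1. Re (B2' z) \<le> 0"
    and "\<forall>t\<ge>0. \<forall>z\<in>ball 0 1. ((\<lambda>s. eta_fun (\<nu> s) z) has_vector_derivative
            eta_fun (\<nu> t) z * B2 (eta_fun (\<nu> t) z)) (at t within {0..})"
    and "\<forall>t\<ge>0. \<forall>z\<in>ball 0 1. ((\<lambda>s. eta_fun (\<nu>' s) z) has_vector_derivative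
            eta_fun (\<nu>' t) z * B2' (eta_fun (\<nu>' t) z)) (at t within {0..})"
  shows "(\<not> is_dirac (\<nu> 1) \<longrightarrow>
            (\<exists>n::int. \<forall>z\<in>ball 0 1. B2' z = (1 + 2 * pi * \<i> * of_int n / B2 0) * B2 z))
       \<and> (is_dirac (\<nu> 1) \<longrightarrow>
            (\<exists>n::int. \<forall>z\<in>ball 0 1. B2' z = B2 z + 2 * pi * \<i> * of_int n))"
proof -
  interpret N: flow \<nu> B2 using assms(1,3,7,11) by (simp add: flow_def)
  interpret N': flow \<nu>' B2' using assms(2,4,8,12) by (simp add: flow_def)
  define m where "m = (\<integral>\<zeta>. \<zeta> \<partial>(\<nu> 1))"
  have e1: "exp (B2 0) = m" using N.m1_eq by (simp add: m_def)
  have e2: "exp (B2' 0) = m" using N'.m1_eq assms(5) by (simp add: m_def)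
  obtain n :: int where n: "B2' 0 = B2 0 + (of_int (2 * n) * pi) * \<i>"
    using e1 e2 exp_eq[of "B2' 0" "B2 0"] by auto
  have nn: "(of_int (2 * n) * pi) * \<i> = 2 * pi * \<i> * (of_int n :: complex)" by simp
  show ?thesis
  proof (intro conjI impI)
    assume dir: "is_dirac (\<nu> 1)"
    have c1: "\<forall>z\<in>ball 0 1. B2 z = B2 0" by (rule N.dirac_const[OF dir])
    have dir': "is_dirac (\<nu>' 1)" using dir assms(5) by simp
    have c2: "\<forall>z\<in>ball 0 1. B2' z = B2' 0" by (rule N'.dirac_const[OF dir'])
    show "\<exists>n::int. \<forall>z\<in>ball 0 1. B2' z = B2 z + 2 * pi * \<i> * of_int n"
    proof (intro exI ballI)
      fix z :: complex assume z: "z \<in> ball 0 1"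
      have z1: "B2' z = B2' 0" using c2 z by blast
      have z2: "B2 z = B2 0" using c1 z by blast
      show "B2' z = B2 z + 2 * pi * \<i> * of_int n" unfolding z1 z2 n nn ..
    qed
  next
    assume nd: "\<not> is_dirac (\<nu> 1)"
    have cp1: "circle_prob (\<nu> 1)" using N.cp by simp
    have mlt: "norm m < 1"
    proof -
      have "norm m \<le> 1" using m1_le[OF cp1] by (simp add: m_def)
      moreover have "norm m \<noteq> 1"
      proof
        assume "norm m = 1"
        then have "\<nu> 1 = return borel m" using m1_dirac[OF cp1] by (simp add: m_def)
        then show False using nd by (auto simp: is_dirac_def)
      qed
      ultimately show ?thesis by simp
    qed
    have s0: "B2 0 \<noteq> 0"
    proof
      assume "B2 0 = 0"
      then have "m = 1" using e1 by simp
      then show False using mlt by simp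
    qed
    have m0: "m \<noteq> 0" using e1 by auto
    define f where "f = eta_fun (\<nu> 1)"
    have fhol: "f holomorphic_on ball 0 1" unfolding f_def by (rule eta_holo[OF cp1])
    have f0: "f 0 = 0" unfolding f_def by (rule eta_0)
    have feq: "f w * B2 (f w) * (w * B2' w) = f w * B2' (f w) * (w * B2 w)" if w: "norm w < 1" for w
    proof -
      obtain d where d: "(f has_field_derivative d) (at w)"
        using eta_has_deriv[OF cp1 w] unfolding f_def by blast
      have h1: "f w * B2 (f w) = (w * B2 w) * d" using N.fe[OF w] d by (simp add: f_def)
      have h2: "f w * B2' (f w) = (w * B2' w) * d" using N'.fe[OF w] d assms(5) by (simp add: f_def)
      show ?thesis unfolding h1 h2 by (simp add: ac_simps)
    qed
    have flim: "((\<lambda>z. f z / z) \<longlongrightarrow> m) (at 0)" using N.lim1 e1 by (simp add: f_def)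
    define \<epsilon> where "\<epsilon> = min (norm m / 2) ((1 - norm m) / 2)"
    have \<epsilon>: "\<epsilon> > 0" using mlt m0 by (simp add: \<epsilon>_def)
    have "\<forall>\<^sub>F z in at 0. dist (f z / z) m < \<epsilon>" by (rule tendstoD[OF flim \<epsilon>])
    then obtain r1 where r10: "r1 > 0" and r11: "\<forall>z\<in>UNIV. z \<noteq> 0 \<and> dist z 0 < r1 \<longrightarrow> dist (f z / z) m < \<epsilon>"
      unfolding eventually_at by blast
    have r1: "r1 > 0" "\<And>z. z \<noteq> 0 \<Longrightarrow> dist z 0 < r1 \<Longrightarrow> dist (f z / z) m < \<epsilon>"
      using r10 r11 by blast+
    define \<rho> where "\<rho> = (1 + norm m) / 2"
    have \<rho>: "0 \<le> \<rho>" "\<rho> < 1" using mlt by (auto simp: \<rho>_def)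
    have fb: "f z \<noteq> 0 \<and> norm (f z) \<le> \<rho> * norm z" if z: "z \<noteq> 0" "norm z < r1" for z
    proof -
      have d: "norm (f z / z - m) < \<epsilon>" using r1(2)[OF z(1)] z by (simp add: dist_norm)
      have "norm (f z / z) \<le> norm m + norm (f z / z - m)" by (metis add.commute diff_add_cancel norm_triangle_ineq)
      then have u: "norm (f z / z) \<le> \<rho>" using d by (simp add: \<epsilon>_def \<rho>_def)
      have "norm m \<le> norm (f z / z) + norm (m - f z / z)" by (metis add.commute diff_add_cancel norm_triangle_ineq)
      moreover have "norm (m - f z / z) < norm m / 2" using d by (simp add: \<epsilon>_def norm_minus_commute)
      moreover have "norm m > 0" using m0 by simp
      ultimately have "norm (f z / z) > 0" by linarith
      then have "f z \<noteq> 0" by auto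
      moreover have "norm (f z) = norm (f z / z) * norm z" using z by (simp add: norm_divide)
      ultimately show ?thesis using u by (simp add: mult_right_mono)
    qed
    have cB0: "isCont B2 0" using N.Bcont by (simp add: continuous_on_eq_continuous_at)
    have cB0': "isCont B2' 0" using N'.Bcont by (simp add: continuous_on_eq_continuous_at)
    have nB0: "norm (B2 0) > 0" using s0 by simp
    have "\<exists>d>0. \<forall>x'. dist x' 0 < d \<longrightarrow> dist (B2 x') (B2 0) < norm (B2 0)"
      using cB0[unfolded continuous_at_eps_delta] nB0 by blast
    then obtain r2 where r2: "r2 > 0" "\<And>z. dist z 0 < r2 \<Longrightarrow> dist (B2 z) (B2 0) < norm (B2 0)"
      by blast
    have Bnz: "B2 z \<noteq> 0" if "norm z < r2" for z
      using r2(2)[of z] that by (auto simp: dist_norm)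
    define r where "r = min r1 (min r2 1)"
    have r: "r > 0" "r \<le> r1" "r \<le> r2" "r \<le> 1" using r1 r2 by (auto simp: r_def)
    define R where "R w = B2' w / B2 w" for w
    have step: "norm (f w) \<le> \<rho> * norm w \<and> R (f w) = R w" if w: "norm w < r" for w
    proof (cases "w = 0")
      case True then show ?thesis using f0 by simp
    next
      case False
      have fw: "f w \<noteq> 0" "norm (f w) \<le> \<rho> * norm w" using fb[OF False] w r by auto
      have "\<rho> * norm w \<le> norm w" using \<rho> by (simp add: mult_left_le_one_le)
      then have fwr: "norm (f w) < r" using fw w by linarith
      have b1: "B2 w \<noteq> 0" using Bnz w r by simp
      have b2: "B2 (f w) \<noteq> 0" using Bnz fwr r by simp
      have "f w * w * (B2 (f w) * B2' w) = f w * w * (B2' (f w) * B2 w)"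
        using feq[of w] w r by (simp add: ac_simps)
      then have "B2 (f w) * B2' w = B2' (f w) * B2 w" using fw(1) False by simp
      then have "R (f w) = R w" using b1 b2 by (simp add: R_def frac_eq_eq ac_simps)
      then show ?thesis using fw by simp
    qed
    have iter: "norm ((f ^^ k) w) \<le> \<rho> ^ k * norm w \<and> R ((f ^^ k) w) = R w" if w: "norm w < r" for w k
    proof (induction k)
      case 0 then show ?case by simp
    next
      case (Suc k)
      have "\<rho> ^ k * norm w \<le> norm w" using \<rho> by (simp add: mult_left_le_one_le power_le_one)
      then have "norm ((f ^^ k) w) < r" using Suc w by linarith
      from step[OF this] have "norm (f ((f ^^ k) w)) \<le> \<rho> * norm ((f ^^ k) w)"
        and "R (f ((f ^^ k) w)) = R ((f ^^ k) w)" by auto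
      moreover have "\<rho> * norm ((f ^^ k) w) \<le> \<rho> * (\<rho> ^ k * norm w)"
        using Suc \<rho> by (simp add: mult_left_mono)
      ultimately show ?case using Suc by simp
    qed
    have Rc: "isCont R 0" unfolding R_def[abs_def] by (rule isCont_divide[OF cB0' cB0 s0])
    have Rw: "R w = R 0" if w: "norm w < r" for w
    proof -
      have g0: "(\<lambda>k. \<rho> ^ k * norm w) \<longlonglongrightarrow> 0"
        by (rule tendsto_mult_left_zero[OF LIMSEQ_power_zero]) (use \<rho> in simp)
      have "(\<lambda>k. (f ^^ k) w) \<longlonglongrightarrow> 0"
        by (rule Lim_null_comparison[OF _ g0]) (use iter[OF w] in simp)
      then have "(\<lambda>k. R ((f ^^ k) w)) \<longlonglongrightarrow> R 0" by (rule isCont_tendsto_compose[OF Rc])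
      then have "(\<lambda>k. R w) \<longlonglongrightarrow> R 0" using iter[OF w] by simp
      then show ?thesis by (simp add: LIMSEQ_const_iff)
    qed
    have loc: "B2' z = R 0 * B2 z" if z: "z \<in> ball 0 r" for z
    proof -
      have "norm z < r" using z by simp
      then have "B2 z \<noteq> 0" "R z = R 0" using Bnz[of z] Rw[of z] r by linarith+
      then show ?thesis by (simp add: R_def field_simps)
    qed
    have glob: "B2' z = R 0 * B2 z" if z: "z \<in> ball 0 1" for z
    proof (rule analytic_continuation_open[where s="ball 0 r" and s'="ball 0 1" and f=B2' and g="\<lambda>z. R 0 * B2 z"])
      show "ball (0::complex) r \<noteq> {}" using r by simp
      show "ball (0::complex) r \<subseteq> ball 0 1" using r by auto
      show "B2' holomorphic_on ball 0 1" by (rule assms(8))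
      show "(\<lambda>z. R 0 * B2 z) holomorphic_on ball 0 1" by (intro holomorphic_intros assms(7))
    qed (use loc z in auto)
    have R0: "R 0 = 1 + 2 * pi * \<i> * of_int n / B2 0"
      using s0 by (simp add: R_def n nn add_divide_distrib)
    show "\<exists>n::int. \<forall>z\<in>ball 0 1. B2' z = (1 + 2 * pi * \<i> * of_int n / B2 0) * B2 z"
    proof (intro exI[of _ n] ballI)
      fix z :: complex assume z: "z \<in> ball 0 1"
      show "B2' z = (1 + 2 * pi * \<i> * of_int n / B2 0) * B2 z" using glob[OF z] unfolding R0 .
    qed
  qed
qed

end
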